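(* Let $m>1$ be an integer and $k$ an odd positive integer. Then $\mathrm{msum}(mk,k)\ge 1-\frac1m$.
   Context: For positive integers $n>k$, let $S_n$ be the set of permutations $\pi=(\pi_1,\dots,\pi_n)$ of $1,\dots,n$, with cyclic indexing $\pi_{n+i}=\pi_i$, and $s_i=\sum_{j=0}^{k-1}\pi_{i+j}$ for $i=1,\dots,n$. Define $\mathrm{msum}(\pi,k)=\max_{1\le i\le n}s_i-\frac{k(n+1)}{2}$ and $\mathrm{msum}(n,k)=\min_{\pi\in S_n}\mathrm{msum}(\pi,k)$. *)

theory Defs
  imports Complex_Main "HOL-Combinatorics.Permutations"
begin

text \<open>A permutation \<pi> of 1..n is a function p with p permutes {1..n}; \<pi>_i = p i.
  Cyclic indexing: \<pi>_{n+i} = \<pi>_i, realised by cyc_idx.\<close>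

definition cyc_idx :: "nat \<Rightarrow> nat \<Rightarrow> nat" where
  "cyc_idx n i = ((i - 1) mod n) + 1"

definition window_sum :: "(nat \<Rightarrow> nat) \<Rightarrow> nat \<Rightarrow> nat \<Rightarrow> nat \<Rightarrow> nat" where
  "window_sum p n k i = (\<Sum>j<k. p (cyc_idx n (i + j)))"

definition msum_perm :: "(nat \<Rightarrow> nat) \<Rightarrow> nat \<Rightarrow> nat \<Rightarrow> real" where
  "msum_perm p n k =
     real (Max ((\<lambda>i. window_sum p n k i) ` {1..n})) - real k * (real n + 1) / 2"

definition msum :: "nat \<Rightarrow> nat \<Rightarrow> real" where
  "msum n k = Min ((\<lambda>p. msum_perm p n k) ` {p. p permutes {1..n}})"

end

theory Submission
  imports Defs
begin

lemma card_le_Max_Min: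
  fixes S :: "nat set"
  assumes "finite S" "S \<noteq> {}"
  shows "card S \<le> Max S - Min S + 1"
proof -
  have "S \<subseteq> {Min S..Max S}" using assms by auto
  hence "card S \<le> card {Min S..Max S}" by (intro card_mono) auto
  thus ?thesis by simp
qed

lemma sum_real_Suc: "(\<Sum>l<n. real (Suc l)) = real n * (real n + 1) / 2"
  by (induction n) (auto simp: field_simps)

lemma key:
  fixes p :: "nat \<Rightarrow> nat" and m k n :: nat
  assumes perm: "p permutes {1..n}" and nmk: "n = m * k" and m1: "m > 1" and k0: "k > 0"
  shows "msum_perm p n k \<ge> 1 - 1 / real m"
proof -
  have n0: "n > 0" using nmk m1 k0 by simp
  define q where "q l = real (p (l mod n + 1))" for l
  define W where "W i = (\<Sum>j<k. q (i+j))" for i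
  define Mx where "Mx = real (Max ((\<lambda>i. window_sum p n k i) ` {1..n}))"
  have WW: "real (window_sum p n k (Suc i)) = W i" for i
    unfolding window_sum_def W_def q_def cyc_idx_def by simp
  have qper: "q (l + n) = q l" for l unfolding q_def by simp
  have qmod: "q (l mod n) = q l" for l unfolding q_def by simp
  have Wmod: "W (i mod n) = W i" for i
    unfolding W_def q_def by (simp add: mod_add_left_eq)
  have Wle: "W i \<le> Mx" for i
  proof -
    have "Suc (i mod n) \<in> {1..n}" using n0 by (simp add: Suc_leI)
    hence "window_sum p n k (Suc (i mod n)) \<le> Max ((\<lambda>i. window_sum p n k i) ` {1..n})"
      by (intro Max_ge) auto
    hence "W (i mod n) \<le> Mx" unfolding Mx_def using WW[of "i mod n"] by linarith
    thus ?thesis using Wmod by simp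
  qed
  have tele: "W (Suc i) - W i = q (i+k) - q i" for i
  proof -
    have "(\<Sum>j<Suc k. q (i+j)) = q i + (\<Sum>j<k. q (i + Suc j))"
      by (subst sum.lessThan_Suc_shift) simp
    moreover have "(\<Sum>j<Suc k. q (i+j)) = (\<Sum>j<k. q (i+j)) + q (i+k)" by simp
    ultimately show ?thesis unfolding W_def by simp
  qed
  have step: "q (i + j*k) - q i = (\<Sum>t<j. W (i+t*k+1) - W (i+t*k))" for i j
  proof (induction j)
    case 0 then show ?case by simp
  next
    case (Suc j)
    have "q (i + Suc j * k) - q (i + j*k) = W (i+j*k+1) - W (i+j*k)"
      using tele[of "i+j*k"] by (simp add: algebra_simps)
    then show ?case using Suc by simp
  qed
  have shiftinv: "(\<Sum>l<n. q (c+l)) = (\<Sum>l<n. q l)" for c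
  proof (induction c)
    case 0 then show ?case by simp
  next
    case (Suc c)
    have "(\<Sum>l<Suc n. q (c+l)) = q c + (\<Sum>l<n. q (c + Suc l))"
      by (subst sum.lessThan_Suc_shift) simp
    moreover have "(\<Sum>l<Suc n. q (c+l)) = (\<Sum>l<n. q (c+l)) + q (c+n)" by simp
    ultimately have "(\<Sum>l<n. q (Suc c + l)) = (\<Sum>l<n. q (c+l))"
      using qper[of c] by (simp add: add.commute)
    then show ?case using Suc by simp
  qed
  have sump: "(\<Sum>l<n. q l) = real n * (real n + 1) / 2"
  proof -
    have "(\<Sum>l<n. q l) = (\<Sum>l<n. real (p (Suc l)))"
      unfolding q_def by (intro sum.cong) auto
    also have "\<dots> = (\<Sum>x\<in>{Suc 0..n}. real (p x))"
      by (simp add: sum.atLeast1_atMost_eq)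
    also have "\<dots> = (\<Sum>x\<in>{Suc 0..n}. real x)"
      using sum.permute[OF perm, of "\<lambda>x. real x"] by (simp add: comp_def)
    also have "\<dots> = (\<Sum>l<n. real (Suc l))"
      by (simp add: sum.atLeast1_atMost_eq)
    finally show ?thesis using sum_real_Suc by simp
  qed
  have total: "(\<Sum>t<m. W (i + t*k)) = real n * (real n + 1) / 2" for i
  proof -
    have "(\<Sum>t<m. W (i + t*k)) = (\<Sum>t<m. \<Sum>l\<in>{t*k..<t*k+k}. q (i+l))"
    proof (intro sum.cong refl)
      fix t
      have "(\<Sum>l\<in>{t*k..<t*k+k}. q (i+l)) = (\<Sum>j\<in>{0..<k}. q (i+(j+t*k)))"
        using sum.shift_bounds_nat_ivl[of "\<lambda>l. q (i+l)" 0 "t*k" k]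
        by (simp add: add.commute)
      thus "W (i + t * k) = (\<Sum>l\<in>{t*k..<t*k+k}. q (i+l))"
        unfolding W_def by (simp add: atLeast0LessThan algebra_simps)
    qed
    also have "\<dots> = (\<Sum>l<m*k. q (i+l))" by (rule sum.nat_group)
    also have "\<dots> = (\<Sum>l<n. q l)" using shiftinv nmk by simp
    finally show ?thesis using sump by simp
  qed
  define D where "D = real m * Mx - real n * (real n + 1) / 2"
  have bound: "q (i + j*k) - q i \<le> D" if "j \<le> m" for i j
  proof -
    have "q (i + j*k) - q i = (\<Sum>t<j. W (i+t*k+1) - W (i+t*k))" by (rule step)
    also have "\<dots> \<le> (\<Sum>t<j. Mx - W (i+t*k))"
      by (intro sum_mono) (use Wle in auto)
    also have "\<dots> \<le> (\<Sum>t<m. Mx - W (i+t*k))"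
      by (intro sum_mono2) (use that Wle in auto)
    also have "\<dots> = real m * Mx - (\<Sum>t<m. W (i+t*k))"
      by (simp add: sum_subtractf)
    finally show ?thesis using total D_def by simp
  qed
  define f where "f t = p (t*k+1)" for t
  define S where "S = f ` {..<m}"
  have injf: "inj_on f {..<m}"
  proof
    fix a b assume a: "a \<in> {..<m}" and b: "b \<in> {..<m}" and e: "f a = f b"
    have "a*k+1 \<in> {1..n}" "b*k+1 \<in> {1..n}" using a b nmk k0
      by (auto simp: Suc_leI mult_less_cancel2)
    hence "a*k+1 = b*k+1" using e permutes_inj_on[OF perm] unfolding f_def inj_on_def
      by (meson inj_onD permutes_inj)
    thus "a = b" using k0 by simp
  qed
  have cS: "card S = m" unfolding S_def using card_image[OF injf] by simp
  have fS: "finite S" "S \<noteq> {}" unfolding S_def using m1 by auto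
  have "m \<le> Max S - Min S + 1" using card_le_Max_Min[OF fS] cS by simp
  have diff: "real m - 1 \<le> real (Max S) - real (Min S)"
  proof -
    have "Min S \<le> Max S" using fS Min_in Max_ge by blast
    thus ?thesis using \<open>m \<le> Max S - Min S + 1\<close> by linarith
  qed
  obtain t1 where t1: "t1 < m" "f t1 = Min S" using Min_in[OF fS] unfolding S_def by auto
  obtain t2 where t2: "t2 < m" "f t2 = Max S" using Max_in[OF fS] unfolding S_def by auto
  have qf: "q (t*k) = real (f t)" if "t < m" for t
  proof -
    have "t*k < n" using that nmk k0 by simp
    thus ?thesis unfolding q_def f_def by simp
  qed
  have "q (t2*k) - q (t1*k) \<le> D"
  proof (cases "t1 \<le> t2")
    case True
    have "t1*k + (t2-t1)*k = t2*k" using True by (simp add: algebra_simps diff_mult_distrib)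
    thus ?thesis using bound[of "t2-t1" "t1*k"] t2 by simp
  next
    case False
    have "t1*k \<le> (m+t2)*k" using t1 by simp
    hence "t1*k + (m + t2 - t1)*k = t2*k + n" using False nmk
      by (simp add: diff_mult_distrib algebra_simps)
    hence "q (t1*k + (m + t2 - t1)*k) = q (t2*k)" using qper by simp
    thus ?thesis using bound[of "m + t2 - t1" "t1*k"] t1 False by simp
  qed
  hence "real m - 1 \<le> D" using diff qf t1 t2 by simp
  moreover have "msum_perm p n k = Mx - real k * (real n + 1) / 2"
    unfolding msum_perm_def Mx_def by simp
  moreover have "D = real m * (Mx - real k * (real n + 1) / 2)"
    unfolding D_def using nmk by (simp add: field_simps)
  ultimately have "real m - 1 \<le> real m * msum_perm p n k" by simp
  moreover have "real m > 0" using m1 by simp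
  ultimately show ?thesis by (simp add: field_simps)
qed

theorem lemma5p2:
  fixes m k :: nat
  assumes "m > 1" and "k > 0" and "odd k"
  shows "msum (m * k) k \<ge> 1 - 1 / real m"
proof -
  have fin: "finite {p. p permutes {1..m*k}}" by (rule finite_permutations) simp
  have ne: "{p. p permutes {1..m*k}} \<noteq> {}" using permutes_id by blast
  show ?thesis unfolding msum_def
    using key[OF _ refl assms(1,2)] fin ne by (subst Min_ge_iff) auto
qed

end
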